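(* Let $W$ be a central type and let $t$ be a closed expression with $\vdash t:W$ derived in the ordered fragment $\mathcal{O}$ (i.e. without the rule (struct)). For every value $v$ with $\vdash v:W$ and all lists of resources $l,l'$, if $\langle t\mid\star\mid l\rangle^+\rightsquigarrow^*\langle v\mid\star\mid l'\rangle^{\varepsilon}$ for some polarity $\varepsilon$, then $l'=l$.
   Context: Polarities are $\varepsilon\in\{+,-\}$. Types: positive $P,Q ::= R \mid 1 \mid A\otimes B \mid A\oplus B$; negative $N,M ::= A\multimap B \mid A\,\&\,B$; $\varpi(P)=+$, $\varpi(N)=-$ ($R$ is an atomic type of resources). Central types are $W ::= 1\mid W\otimes W'\mid W\oplus W'$. Fix variables and resource constants $r_n$ ($n\in\mathbb N$). Expressions $t,u$ and values $v,w$: $t,u ::= v \mid (\mathrm{let}\ x^+=t\ \mathrm{in}\ u)^+ \mid (\mathrm{let}\ x^-=v\ \mathrm{in}\ u)^+ \mid \delta(v,(x,y).t)^+ \mid \delta(v,().t)^+ \mid \delta(v,x.t,y.u)^+ \mid (v\,w)^+ \mid (\pi_1 v)^+ \mid (\pi_2 v)^+$; $v,w ::= (\mathrm{let}\ x^+=t\ \mathrm{in}\ v)^- \mid (\mathrm{let}\ x^-=v\ \mathrm{in}\ w)^- \mid \delta(v,(x,y).w)^- \mid \delta(v,().w)^- \mid \delta(v,x.w,y.w')^- \mid (v\,w)^- \mid (\pi_1 v)^- \mid (\pi_2 v)^- \mid x \mid \mathrm{new} \mid \mathrm{delete} \mid (v,w) \mid () \mid \iota_1 v \mid \iota_2 v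 \mid \lambda x.t \mid \langle t,u\rangle \mid r_n$. $t[v/x]$ is capture-avoiding substitution. Contexts are finite lists of typed variables. Typing rules of $\mathcal{L}$ ($v,w$ range over values): (var) $x:A\vdash x:A$. (struct) from $\Gamma\vdash t:A$ and a type-preserving bijection $\sigma$ from entries of $\Gamma$ to entries of $\Gamma'$ (permutation plus renaming) derive $\Gamma'\vdash t[\sigma]:A$. $\vdash\mathrm{new}:1\multimap(R\oplus 1)$; $\vdash\mathrm{delete}:R\multimap 1$. (let) from $\Delta\vdash t:A$, $\Gamma,x:A\vdash u:B$ derive $\Gamma,\Delta\vdash(\mathrm{let}\ x^{\varpi(A)}=t\ \mathrm{in}\ u)^{\varpi(B)}:B$. From $\Gamma\vdash v:A$, $\Delta\vdash w:B$ derive $\Gamma,\Delta\vdash(v,w):A\otimes B$; from $\Delta\vdash v:A\otimes B$, $\Gamma,x:A,y:B,\Gamma'\vdash t:C$ derive $\Gamma,\Delta,\Gamma'\vdash\delta(v,(x,y).t)^{\varpi(C)}:C$. $\vdash():1$; from $\Delta\vdash v:1$, $\Gamma,\Gamma'\vdash t:A$ derive $\Gamma,\Delta,\Gamma'\vdash\delta(v,().t)^{\varpi(A)}:A$. From $\Gamma\vdash v:A$ derive $\Gamma\vdash\iota_1v:A\oplus B$; from $\Gamma\vdash v:B$ derive $\Gamma\vdash\iota_2v:A\oplus B$; from $\Delta\vdash v:A\oplus B$, $\Gamma,x:A,\Gamma'\vdash t:C$, $\Gamma,y:B,\Gamma'\vdash u:C$ derive $\Gamma,\Delta,\Gamma'\vdash\delta(v,x.t,y.u)^{\varpi(C)}:C$.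 From $x:A,\Gamma\vdash t:B$ derive $\Gamma\vdash\lambda x.t:A\multimap B$; from $\Gamma\vdash w:A$, $\Delta\vdash v:A\multimap B$ derive $\Gamma,\Delta\vdash(v\,w)^{\varpi(B)}:B$. From $\Gamma\vdash t:A$, $\Gamma\vdash u:B$ derive $\Gamma\vdash\langle t,u\rangle:A\&B$; from $\Gamma\vdash v:A_1\&A_2$ derive $\Gamma\vdash(\pi_iv)^{\varpi(A_i)}:A_i$. The ordered fragment $\mathcal{O}$ consists of derivations not using (struct). Machine: stacks $s ::= \star \mid v^\varepsilon\cdot s \mid \pi_i^\varepsilon\cdot s \mid (x^+.u)^\varepsilon\cdot s$; lists of resources $l ::= []\mid r_n::l$ (the freelist); commands $\langle t\mid s\mid l\rangle^\varepsilon$; $\rightsquigarrow^*$ is the reflexive-transitive closure of the one-step reduction $\rightsquigarrow$ given by ($i\in\{1,2\}$): $\langle(\mathrm{let}\ x^-=v\ \mathrm{in}\ t)^\varepsilon\mid s\mid l\rangle^\varepsilon\rightsquigarrow\langle t[v/x]\mid s\mid l\rangle^\varepsilon$; $\langle(\mathrm{let}\ x^+=t\ \mathrm{in}\ u)^\varepsilon\mid s\mid l\rangle^\varepsilon\rightsquigarrow\langle t\mid (x^+.u)^\varepsilon\cdot s\mid l\rangle^+$; $\langle v\mid (x^+.t)^\varepsilon\cdot s\mid l\rangle^+\rightsquigarrow\langle t[v/x]\mid s\mid l\rangle^\varepsilon$; $\langle (v\,w)^\varepsilon\mid s\mid l\rangle^\varepsilon\rightsquigarrow\langle v\mid w^\varepsilon\cdot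 s\mid l\rangle^-$; $\langle \lambda x.t\mid v^\varepsilon\cdot s\mid l\rangle^-\rightsquigarrow\langle t[v/x]\mid s\mid l\rangle^\varepsilon$; $\langle (\pi_i v)^\varepsilon\mid s\mid l\rangle^\varepsilon\rightsquigarrow\langle v\mid \pi_i^\varepsilon\cdot s\mid l\rangle^-$; $\langle \langle t_1,t_2\rangle\mid \pi_i^\varepsilon\cdot s\mid l\rangle^-\rightsquigarrow\langle t_i\mid s\mid l\rangle^\varepsilon$; $\langle \delta((v,w),(x,y).t)^\varepsilon\mid s\mid l\rangle^\varepsilon\rightsquigarrow\langle t[v/x,w/y]\mid s\mid l\rangle^\varepsilon$; $\langle \delta((),().t)^\varepsilon\mid s\mid l\rangle^\varepsilon\rightsquigarrow\langle t\mid s\mid l\rangle^\varepsilon$; $\langle \delta(\iota_i v,x_1.t_1,x_2.t_2)^\varepsilon\mid s\mid l\rangle^\varepsilon\rightsquigarrow\langle t_i[v/x_i]\mid s\mid l\rangle^\varepsilon$; $\langle \mathrm{new}\mid ()^{\varepsilon}\cdot s\mid r_n::l\rangle^-\rightsquigarrow\langle \iota_1 r_n\mid s\mid l\rangle^+$; $\langle \mathrm{new}\mid ()^{\varepsilon}\cdot s\mid []\rangle^-\rightsquigarrow\langle \iota_2 ()\mid s\mid []\rangle^+$; $\langle \mathrm{delete}\mid r_n^{\varepsilon}\cdot s\mid l\rangle^-\rightsquigarrow\langle ()\mid s\mid r_n::l\rangle^+$. *)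

theory Defs
  imports Main "HOL-Library.Multiset"
begin

datatype pol = Pos | Neg

datatype ty = R | One | Tensor ty ty | Plus ty ty | Lolli ty ty | With ty ty

fun polty :: "ty \<Rightarrow> pol" where
  "polty R = Pos"
| "polty One = Pos"
| "polty (Tensor A B) = Pos"
| "polty (Plus A B) = Pos"
| "polty (Lolli A B) = Neg"
| "polty (With A B) = Neg"

fun central :: "ty \<Rightarrow> bool" where
  "central One = True"
| "central (Tensor A B) = (central A \<and> central B)"
| "central (Plus A B) = (central A \<and> central B)"
| "central _ = False"

type_synonym var = nat

text \<open>LetP x t u e = (let x^+ = t in u)^e, LetN x v u e = (let x^- = v in u)^e,
  DPair v x y t e = delta(v,(x,y).t)^e, DUnit v t e = delta(v,().t)^e,
  DSum v x t y u e = delta(v,x.t,y.u)^e, App v w e = (v w)^e,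
  Proj1 v e = (pi_1 v)^e, Proj2 v e = (pi_2 v)^e,
  Inj1/Inj2 = iota_1/iota_2, Lam x t = lambda x.t, Wth t u = <t,u>, Res n = r_n.\<close>
datatype tm =
    Var var | New | Delete | Res nat
  | Pair tm tm | Unit | Inj1 tm | Inj2 tm | Lam var tm | Wth tm tm
  | LetP var tm tm pol
  | LetN var tm tm pol
  | DPair tm var var tm pol
  | DUnit tm tm pol
  | DSum tm var tm var tm pol
  | App tm tm pol
  | Proj1 tm pol
  | Proj2 tm pol

inductive is_val :: "tm \<Rightarrow> bool" and is_exp :: "tm \<Rightarrow> bool" where
  v_letp: "is_exp t \<Longrightarrow> is_val v \<Longrightarrow> is_val (LetP x t v Neg)"
| v_letn: "is_val v \<Longrightarrow> is_val w \<Longrightarrow> is_val (LetN x v w Neg)"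
| v_dpair: "is_val v \<Longrightarrow> is_val w \<Longrightarrow> is_val (DPair v x y w Neg)"
| v_dunit: "is_val v \<Longrightarrow> is_val w \<Longrightarrow> is_val (DUnit v w Neg)"
| v_dsum: "is_val v \<Longrightarrow> is_val w \<Longrightarrow> is_val w' \<Longrightarrow> is_val (DSum v x w y w' Neg)"
| v_app: "is_val v \<Longrightarrow> is_val w \<Longrightarrow> is_val (App v w Neg)"
| v_proj1: "is_val v \<Longrightarrow> is_val (Proj1 v Neg)"
| v_proj2: "is_val v \<Longrightarrow> is_val (Proj2 v Neg)"
| v_var: "is_val (Var x)"
| v_new: "is_val New"
| v_delete: "is_val Delete"
| v_pair: "is_val v \<Longrightarrow> is_val w \<Longrightarrow> is_val (Pair v w)"
| v_unit: "is_val Unit"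
| v_inj1: "is_val v \<Longrightarrow> is_val (Inj1 v)"
| v_inj2: "is_val v \<Longrightarrow> is_val (Inj2 v)"
| v_lam: "is_exp t \<Longrightarrow> is_val (Lam x t)"
| v_wth: "is_exp t \<Longrightarrow> is_exp u \<Longrightarrow> is_val (Wth t u)"
| v_res: "is_val (Res n)"
| e_val: "is_val v \<Longrightarrow> is_exp v"
| e_letp: "is_exp t \<Longrightarrow> is_exp u \<Longrightarrow> is_exp (LetP x t u Pos)"
| e_letn: "is_val v \<Longrightarrow> is_exp u \<Longrightarrow> is_exp (LetN x v u Pos)"
| e_dpair: "is_val v \<Longrightarrow> is_exp t \<Longrightarrow> is_exp (DPair v x y t Pos)"
| e_dunit: "is_val v \<Longrightarrow> is_exp t \<Longrightarrow> is_exp (DUnit v t Pos)"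
| e_dsum: "is_val v \<Longrightarrow> is_exp t \<Longrightarrow> is_exp u \<Longrightarrow> is_exp (DSum v x t y u Pos)"
| e_app: "is_val v \<Longrightarrow> is_val w \<Longrightarrow> is_exp (App v w Pos)"
| e_proj1: "is_val v \<Longrightarrow> is_exp (Proj1 v Pos)"
| e_proj2: "is_val v \<Longrightarrow> is_exp (Proj2 v Pos)"

text \<open>Binders shadow; no renaming of binders is performed,
  so this is capture-avoiding whenever v is closed, which is the case for every
  substitution performed by the machine on configurations reachable from a closed
  expression with the empty stack.\<close>
fun subst :: "tm \<Rightarrow> var \<Rightarrow> tm \<Rightarrow> tm" where
  "subst (Var y) x v = (if y = x then v else Var y)"
| "subst New x v = New"
| "subst Delete x v = Delete"
| "subst (Res n) x v = Res n"
| "subst (Pair a b) x v = Pair (subst a x v) (subst b x v)"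
| "subst Unit x v = Unit"
| "subst (Inj1 a) x v = Inj1 (subst a x v)"
| "subst (Inj2 a) x v = Inj2 (subst a x v)"
| "subst (Lam y a) x v = Lam y (if y = x then a else subst a x v)"
| "subst (Wth a b) x v = Wth (subst a x v) (subst b x v)"
| "subst (LetP y a b e) x v = LetP y (subst a x v) (if y = x then b else subst b x v) e"
| "subst (LetN y a b e) x v = LetN y (subst a x v) (if y = x then b else subst b x v) e"
| "subst (DPair a y z b e) x v =
     DPair (subst a x v) y z (if y = x \<or> z = x then b else subst b x v) e"
| "subst (DUnit a b e) x v = DUnit (subst a x v) (subst b x v) e"
| "subst (DSum a y b z c e) x v =
     DSum (subst a x v) y (if y = x then b else subst b x v) z (if z = x then c else subst c x v) e"
| "subst (App a b e) x v = App (subst a x v) (subst b x v) e"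
| "subst (Proj1 a e) x v = Proj1 (subst a x v) e"
| "subst (Proj2 a e) x v = Proj2 (subst a x v) e"

text \<open>Renaming of all variable occurrences (free and bound) by a function f; for a
  bijection f this is (up to alpha-equivalence) the capture-avoiding renaming t[sigma].\<close>
fun ren :: "(var \<Rightarrow> var) \<Rightarrow> tm \<Rightarrow> tm" where
  "ren f (Var y) = Var (f y)"
| "ren f New = New"
| "ren f Delete = Delete"
| "ren f (Res n) = Res n"
| "ren f (Pair a b) = Pair (ren f a) (ren f b)"
| "ren f Unit = Unit"
| "ren f (Inj1 a) = Inj1 (ren f a)"
| "ren f (Inj2 a) = Inj2 (ren f a)"
| "ren f (Lam y a) = Lam (f y) (ren f a)"
| "ren f (Wth a b) = Wth (ren f a) (ren f b)"
| "ren f (LetP y a b e) = LetP (f y) (ren f a) (ren f b) e"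
| "ren f (LetN y a b e) = LetN (f y) (ren f a) (ren f b) e"
| "ren f (DPair a y z b e) = DPair (ren f a) (f y) (f z) (ren f b) e"
| "ren f (DUnit a b e) = DUnit (ren f a) (ren f b) e"
| "ren f (DSum a y b z c e) = DSum (ren f a) (f y) (ren f b) (f z) (ren f c) e"
| "ren f (App a b e) = App (ren f a) (ren f b) e"
| "ren f (Proj1 a e) = Proj1 (ren f a) e"
| "ren f (Proj2 a e) = Proj2 (ren f a) e"

type_synonym ctx = "(var \<times> ty) list"

definition ctx_ok :: "ctx \<Rightarrow> bool" where
  "ctx_ok G \<longleftrightarrow> distinct (map fst G)"

text \<open>has_ty b G t A: G |- t : A.  The flag b says whether rule (struct) may be used:
  has_ty True is the full system L, has_ty False is the ordered fragment O.\<close>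
inductive has_ty :: "bool \<Rightarrow> ctx \<Rightarrow> tm \<Rightarrow> ty \<Rightarrow> bool" where
  t_var: "has_ty b [(x, A)] (Var x) A"
| t_struct: "has_ty True G t A \<Longrightarrow> bij f \<Longrightarrow>
     mset G' = mset (map (\<lambda>(x, B). (f x, B)) G) \<Longrightarrow> has_ty True G' (ren f t) A"
| t_new: "has_ty b [] New (Lolli One (Plus R One))"
| t_delete: "has_ty b [] Delete (Lolli R One)"
| t_letp: "has_ty b D t A \<Longrightarrow> has_ty b (G @ [(x, A)]) u B \<Longrightarrow> polty A = Pos \<Longrightarrow>
     ctx_ok (G @ D) \<Longrightarrow> ctx_ok (G @ [(x, A)]) \<Longrightarrow> ctx_ok D \<Longrightarrow>
     has_ty b (G @ D) (LetP x t u (polty B)) B"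
| t_letn: "has_ty b D t A \<Longrightarrow> has_ty b (G @ [(x, A)]) u B \<Longrightarrow> polty A = Neg \<Longrightarrow>
     ctx_ok (G @ D) \<Longrightarrow> ctx_ok (G @ [(x, A)]) \<Longrightarrow> ctx_ok D \<Longrightarrow>
     has_ty b (G @ D) (LetN x t u (polty B)) B"
| t_pair: "is_val v \<Longrightarrow> is_val w \<Longrightarrow> has_ty b G v A \<Longrightarrow> has_ty b D w B \<Longrightarrow>
     ctx_ok G \<Longrightarrow> ctx_ok D \<Longrightarrow> ctx_ok (G @ D) \<Longrightarrow>
     has_ty b (G @ D) (Pair v w) (Tensor A B)"
| t_dpair: "is_val v \<Longrightarrow> has_ty b D v (Tensor A B) \<Longrightarrow>
     has_ty b (G @ [(x, A), (y, B)] @ G') t C \<Longrightarrow>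
     ctx_ok D \<Longrightarrow> ctx_ok (G @ [(x, A), (y, B)] @ G') \<Longrightarrow> ctx_ok (G @ D @ G') \<Longrightarrow>
     has_ty b (G @ D @ G') (DPair v x y t (polty C)) C"
| t_unit: "has_ty b [] Unit One"
| t_dunit: "is_val v \<Longrightarrow> has_ty b D v One \<Longrightarrow> has_ty b (G @ G') t A \<Longrightarrow>
     ctx_ok D \<Longrightarrow> ctx_ok (G @ G') \<Longrightarrow> ctx_ok (G @ D @ G') \<Longrightarrow>
     has_ty b (G @ D @ G') (DUnit v t (polty A)) A"
| t_inj1: "is_val v \<Longrightarrow> has_ty b G v A \<Longrightarrow> has_ty b G (Inj1 v) (Plus A B)"
| t_inj2: "is_val v \<Longrightarrow> has_ty b G v B \<Longrightarrow> has_ty b G (Inj2 v) (Plus A B)"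
| t_dsum: "is_val v \<Longrightarrow> has_ty b D v (Plus A B) \<Longrightarrow>
     has_ty b (G @ [(x, A)] @ G') t C \<Longrightarrow> has_ty b (G @ [(y, B)] @ G') u C \<Longrightarrow>
     ctx_ok D \<Longrightarrow> ctx_ok (G @ [(x, A)] @ G') \<Longrightarrow> ctx_ok (G @ [(y, B)] @ G') \<Longrightarrow>
     ctx_ok (G @ D @ G') \<Longrightarrow>
     has_ty b (G @ D @ G') (DSum v x t y u (polty C)) C"
| t_lam: "has_ty b ((x, A) # G) t B \<Longrightarrow> ctx_ok ((x, A) # G) \<Longrightarrow>
     has_ty b G (Lam x t) (Lolli A B)"
| t_app: "is_val w \<Longrightarrow> is_val v \<Longrightarrow> has_ty b G w A \<Longrightarrow> has_ty b D v (Lolli A B) \<Longrightarrow>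
     ctx_ok G \<Longrightarrow> ctx_ok D \<Longrightarrow> ctx_ok (G @ D) \<Longrightarrow>
     has_ty b (G @ D) (App v w (polty B)) B"
| t_wth: "has_ty b G t A \<Longrightarrow> has_ty b G u B \<Longrightarrow> ctx_ok G \<Longrightarrow> has_ty b G (Wth t u) (With A B)"
| t_proj1: "is_val v \<Longrightarrow> has_ty b G v (With A1 A2) \<Longrightarrow> has_ty b G (Proj1 v (polty A1)) A1"
| t_proj2: "is_val v \<Longrightarrow> has_ty b G v (With A1 A2) \<Longrightarrow> has_ty b G (Proj2 v (polty A2)) A2"

text \<open>Stacks: Star, SVal v e = v^e . s, SProj1/2 e = pi_i^e . s, SLet x u e = (x^+.u)^e . s.\<close>
datatype stack = Star | SVal tm pol stack | SProj1 pol stack | SProj2 pol stack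
  | SLet var tm pol stack

text \<open>Freelists l are lists of resources r_n, represented by the list of indices n.\<close>
type_synonym freelist = "nat list"

text \<open>A command <t | s | l>^e is represented as (t, s, l, e).\<close>
type_synonym cmd = "tm \<times> stack \<times> freelist \<times> pol"

inductive step :: "cmd \<Rightarrow> cmd \<Rightarrow> bool" where
  s_letn: "step (LetN x v t e, s, l, e) (subst t x v, s, l, e)"
| s_letp: "step (LetP x t u e, s, l, e) (t, SLet x u e s, l, Pos)"
| s_ret: "is_val v \<Longrightarrow> step (v, SLet x t e s, l, Pos) (subst t x v, s, l, e)"
| s_app: "step (App v w e, s, l, e) (v, SVal w e s, l, Neg)"
| s_lam: "step (Lam x t, SVal v e s, l, Neg) (subst t x v, s, l, e)"
| s_proj1: "step (Proj1 v e, s, l, e) (v, SProj1 e s, l, Neg)"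
| s_proj2: "step (Proj2 v e, s, l, e) (v, SProj2 e s, l, Neg)"
| s_wth1: "step (Wth t1 t2, SProj1 e s, l, Neg) (t1, s, l, e)"
| s_wth2: "step (Wth t1 t2, SProj2 e s, l, Neg) (t2, s, l, e)"
| s_dpair: "step (DPair (Pair v w) x y t e, s, l, e) (subst (subst t x v) y w, s, l, e)"
| s_dunit: "step (DUnit Unit t e, s, l, e) (t, s, l, e)"
| s_dsum1: "step (DSum (Inj1 v) x1 t1 x2 t2 e, s, l, e) (subst t1 x1 v, s, l, e)"
| s_dsum2: "step (DSum (Inj2 v) x1 t1 x2 t2 e, s, l, e) (subst t2 x2 v, s, l, e)"
| s_new1: "step (New, SVal Unit e s, n # l, Neg) (Inj1 (Res n), s, l, Pos)"
| s_new2: "step (New, SVal Unit e s, [], Neg) (Inj2 Unit, s, [], Pos)"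
| s_delete: "step (Delete, SVal (Res n) e s, l, Neg) (Unit, s, n # l, Pos)"

abbreviation steps :: "cmd \<Rightarrow> cmd \<Rightarrow> bool" where
  "steps \<equiv> step\<^sup>*\<^sup>*"

end

theory Submission
  imports Defs
begin

datatype atom = AV var | AR nat
type_synonym actx = "(atom \<times> ty) list"

fun vars :: "actx \<Rightarrow> var list" where
  "vars [] = []"
| "vars ((AV x, _) # S) = x # vars S"
| "vars ((AR _, _) # S) = vars S"

lemma vars_append[simp]: "vars (S1 @ S2) = vars S1 @ vars S2"
  by (induction S1 rule: vars.induct) auto

definition vd :: "actx \<Rightarrow> bool" where "vd S \<longleftrightarrow> distinct (vars S)"

definition rc :: "nat list \<Rightarrow> actx" where "rc l = map (\<lambda>n. (AR n, R)) l"

lemma vars_rc[simp]: "vars (rc l) = []"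
  by (induction l) (auto simp: rc_def)

lemma rc_simps[simp]: "rc [] = []" "rc (n # l) = (AR n, R) # rc l" "rc (l1 @ l2) = rc l1 @ rc l2"
  by (auto simp: rc_def)

lemma rc_split: "rc r = G @ D \<Longrightarrow> \<exists>r1 r2. r = r1 @ r2 \<and> G = rc r1 \<and> D = rc r2"
  unfolding rc_def by (auto simp: map_eq_append_conv)

inductive mty :: "actx \<Rightarrow> tm \<Rightarrow> ty \<Rightarrow> bool" where
  m_var: "mty [(AV x, A)] (Var x) A"
| m_res: "mty [(AR n, R)] (Res n) R"
| m_new: "mty [] New (Lolli One (Plus R One))"
| m_delete: "mty [] Delete (Lolli R One)"
| m_letp: "mty D t A \<Longrightarrow> mty (G @ [(AV x, A)]) u B \<Longrightarrow> vd (G @ D) \<Longrightarrow>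
     mty (G @ D) (LetP x t u (polty B)) B"
| m_letn: "mty D t A \<Longrightarrow> mty (G @ [(AV x, A)]) u B \<Longrightarrow> vd (G @ D) \<Longrightarrow>
     mty (G @ D) (LetN x t u (polty B)) B"
| m_pair: "mty G v A \<Longrightarrow> mty D w B \<Longrightarrow> vd (G @ D) \<Longrightarrow> mty (G @ D) (Pair v w) (Tensor A B)"
| m_dpair: "mty D v (Tensor A B) \<Longrightarrow> mty (G @ (AV x, A) # (AV y, B) # G') t C \<Longrightarrow>
     vd (G @ D @ G') \<Longrightarrow> mty (G @ D @ G') (DPair v x y t (polty C)) C"
| m_unit: "mty [] Unit One"
| m_dunit: "mty D v One \<Longrightarrow> mty (G @ G') t A \<Longrightarrow> vd (G @ D @ G') \<Longrightarrow>
     mty (G @ D @ G') (DUnit v t (polty A)) A"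
| m_inj1: "mty G v A \<Longrightarrow> mty G (Inj1 v) (Plus A B)"
| m_inj2: "mty G v B \<Longrightarrow> mty G (Inj2 v) (Plus A B)"
| m_dsum: "mty D v (Plus A B) \<Longrightarrow> mty (G @ (AV x, A) # G') t C \<Longrightarrow> mty (G @ (AV y, B) # G') u C \<Longrightarrow>
     vd (G @ D @ G') \<Longrightarrow> mty (G @ D @ G') (DSum v x t y u (polty C)) C"
| m_lam: "mty ((AV x, A) # G) t B \<Longrightarrow> mty G (Lam x t) (Lolli A B)"
| m_app: "mty G w A \<Longrightarrow> mty D v (Lolli A B) \<Longrightarrow> vd (G @ D) \<Longrightarrow> mty (G @ D) (App v w (polty B)) B"
| m_wth: "mty G t A \<Longrightarrow> mty G u B \<Longrightarrow> mty G (Wth t u) (With A B)"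
| m_proj1: "mty G v (With A1 A2) \<Longrightarrow> mty G (Proj1 v (polty A1)) A1"
| m_proj2: "mty G v (With A1 A2) \<Longrightarrow> mty G (Proj2 v (polty A2)) A2"

lemma mty_vd: "mty S t A \<Longrightarrow> vd S"
  by (induction rule: mty.induct) (auto simp: vd_def)

lemma mty_notfree: "mty S t A \<Longrightarrow> x \<notin> set (vars S) \<Longrightarrow> subst t x v = t"
  by (induction rule: mty.induct) auto

lemma split2: "G1 @ D1 = G @ a # G' \<Longrightarrow>
  (\<exists>H. G1 = G @ a # H \<and> G' = H @ D1) \<or> (\<exists>H. D1 = H @ a # G' \<and> G = G1 @ H)"
proof -
  assume "G1 @ D1 = G @ a # G'"
  then obtain us where "(G1 = G @ us \<and> us @ D1 = a # G') \<or> (G1 @ us = G \<and> D1 = us @ a # G')"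
    by (auto simp: append_eq_append_conv2)
  then show ?thesis
  proof
    assume "G1 = G @ us \<and> us @ D1 = a # G'"
    then show ?thesis by (cases us) auto
  qed auto
qed

lemma split3: "G1 @ D1 @ G1' = G @ a # G' \<Longrightarrow>
  (\<exists>H. G1 = G @ a # H \<and> G' = H @ D1 @ G1') \<or>
  (\<exists>H1 H2. D1 = H1 @ a # H2 \<and> G = G1 @ H1 \<and> G' = H2 @ G1') \<or>
  (\<exists>H. G1' = H @ a # G' \<and> G = G1 @ D1 @ H)"
proof -
  assume h: "G1 @ D1 @ G1' = G @ a # G'"
  from split2[OF h] show ?thesis
  proof
    assume "\<exists>H. D1 @ G1' = H @ a # G' \<and> G = G1 @ H"
    then obtain H where "D1 @ G1' = H @ a # G'" "G = G1 @ H" by blast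
    from split2[OF this(1)] this(2) show ?thesis by auto
  qed auto
qed

lemma vd_mid: "vd (G @ (AV x, A) # G') \<Longrightarrow> vd (G @ rc D @ G')"
  by (auto simp: vd_def)

lemma subst_ty:
  assumes "mty S t C" "S = G @ (AV x, A) # G'" "mty (rc D) v A"
  shows "mty (G @ rc D @ G') (subst t x v) C"
  using assms
proof (induction arbitrary: G G' rule: mty.induct)
  case (m_var y B)
  then show ?case by (auto simp: Cons_eq_append_conv)
next
  case (m_res n)
  then show ?case by (auto simp: Cons_eq_append_conv)
next
  case m_new then show ?case by auto
next
  case m_delete then show ?case by auto
next
  case m_unit then show ?case by auto
next
  case (m_letp D0 t0 A0 G0 y u B)
  from split2[OF m_letp.prems(1)] show ?case
  proof (elim disjE exE conjE)
    fix H assume h: "G0 = G @ (AV x, A) # H" "G' = H @ D0"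
    have "vd (G0 @ [(AV y, A0)])" using m_letp.hyps(2) by (rule mty_vd)
    with h have xy: "x \<noteq> y" by (auto simp: vd_def)
    have "x \<notin> set (vars D0)" using m_letp.hyps(3) h by (auto simp: vd_def)
    then have t0: "subst t0 x v = t0" using m_letp.hyps(1) mty_notfree by blast
    have "mty (G @ rc D @ H @ [(AV y, A0)]) (subst u x v) B"
      using m_letp.IH(2)[of G "H @ [(AV y, A0)]"] h m_letp.prems(2) by simp
    moreover have "vd ((G @ rc D @ H) @ D0)" using m_letp.hyps(3) h vd_mid[of G x A "H @ D0" D] by simp
    ultimately have "mty ((G @ rc D @ H) @ D0) (LetP y t0 (subst u x v) (polty B)) B"
      using m_letp.hyps(1) by - (rule mty.m_letp, auto)
    then show ?thesis using h t0 xy by simp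
  next
    fix H assume h: "D0 = H @ (AV x, A) # G'" "G = G0 @ H"
    have "x \<notin> set (vars G0)" using m_letp.hyps(3) h by (auto simp: vd_def)
    then have u: "(if y = x then u else subst u x v) = u"
      using m_letp.hyps(2) mty_notfree[of _ u _ x v] by auto
    have "mty (H @ rc D @ G') (subst t0 x v) A0"
      using m_letp.IH(1)[of H G'] h m_letp.prems(2) by simp
    moreover have "vd (G0 @ H @ rc D @ G')" using m_letp.hyps(3) h vd_mid[of "G0 @ H" x A G' D] by simp
    ultimately have "mty (G0 @ (H @ rc D @ G')) (LetP y (subst t0 x v) u (polty B)) B"
      using m_letp.hyps(2) by - (rule mty.m_letp, auto)
    then show ?thesis using h u by simp
  qed
next
  case (m_letn D0 t0 A0 G0 y u B)
  from split2[OF m_letn.prems(1)] show ?case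
  proof (elim disjE exE conjE)
    fix H assume h: "G0 = G @ (AV x, A) # H" "G' = H @ D0"
    have "vd (G0 @ [(AV y, A0)])" using m_letn.hyps(2) by (rule mty_vd)
    with h have xy: "x \<noteq> y" by (auto simp: vd_def)
    have "x \<notin> set (vars D0)" using m_letn.hyps(3) h by (auto simp: vd_def)
    then have t0: "subst t0 x v = t0" using m_letn.hyps(1) mty_notfree by blast
    have "mty (G @ rc D @ H @ [(AV y, A0)]) (subst u x v) B"
      using m_letn.IH(2)[of G "H @ [(AV y, A0)]"] h m_letn.prems(2) by simp
    moreover have "vd ((G @ rc D @ H) @ D0)" using m_letn.hyps(3) h vd_mid[of G x A "H @ D0" D] by simp
    ultimately have "mty ((G @ rc D @ H) @ D0) (LetN y t0 (subst u x v) (polty B)) B"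
      using m_letn.hyps(1) by - (rule mty.m_letn, auto)
    then show ?thesis using h t0 xy by simp
  next
    fix H assume h: "D0 = H @ (AV x, A) # G'" "G = G0 @ H"
    have "x \<notin> set (vars G0)" using m_letn.hyps(3) h by (auto simp: vd_def)
    then have u: "(if y = x then u else subst u x v) = u"
      using m_letn.hyps(2) mty_notfree[of _ u _ x v] by auto
    have "mty (H @ rc D @ G') (subst t0 x v) A0"
      using m_letn.IH(1)[of H G'] h m_letn.prems(2) by simp
    moreover have "vd (G0 @ H @ rc D @ G')" using m_letn.hyps(3) h vd_mid[of "G0 @ H" x A G' D] by simp
    ultimately have "mty (G0 @ (H @ rc D @ G')) (LetN y (subst t0 x v) u (polty B)) B"
      using m_letn.hyps(2) by - (rule mty.m_letn, auto)
    then show ?thesis using h u by simp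
  qed
next
  case (m_pair G0 v0 A0 D0 w0 B0)
  from split2[OF m_pair.prems(1)] show ?case
  proof (elim disjE exE conjE)
    fix H assume h: "G0 = G @ (AV x, A) # H" "G' = H @ D0"
    have "x \<notin> set (vars D0)" using m_pair.hyps(3) h by (auto simp: vd_def)
    then have w: "subst w0 x v = w0" using m_pair.hyps(2) mty_notfree by blast
    have "mty (G @ rc D @ H) (subst v0 x v) A0"
      using m_pair.IH(1)[of G H] h m_pair.prems(2) by simp
    moreover have "vd ((G @ rc D @ H) @ D0)" using m_pair.hyps(3) h vd_mid[of G x A "H @ D0" D] by simp
    ultimately have "mty ((G @ rc D @ H) @ D0) (Pair (subst v0 x v) w0) (Tensor A0 B0)"
      using m_pair.hyps(2) by - (rule mty.m_pair, auto)
    then show ?thesis using h w by simp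
  next
    fix H assume h: "D0 = H @ (AV x, A) # G'" "G = G0 @ H"
    have "x \<notin> set (vars G0)" using m_pair.hyps(3) h by (auto simp: vd_def)
    then have w: "subst v0 x v = v0" using m_pair.hyps(1) mty_notfree by blast
    have "mty (H @ rc D @ G') (subst w0 x v) B0"
      using m_pair.IH(2)[of H G'] h m_pair.prems(2) by simp
    moreover have "vd (G0 @ H @ rc D @ G')" using m_pair.hyps(3) h vd_mid[of "G0 @ H" x A G' D] by simp
    ultimately have "mty (G0 @ (H @ rc D @ G')) (Pair v0 (subst w0 x v)) (Tensor A0 B0)"
      using m_pair.hyps(1) by - (rule mty.m_pair, auto)
    then show ?thesis using h w by simp
  qed
next
  case (m_app G0 w0 A0 D0 v0 B0)
  from split2[OF m_app.prems(1)] show ?case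
  proof (elim disjE exE conjE)
    fix H assume h: "G0 = G @ (AV x, A) # H" "G' = H @ D0"
    have "x \<notin> set (vars D0)" using m_app.hyps(3) h by (auto simp: vd_def)
    then have w: "subst v0 x v = v0" using m_app.hyps(2) mty_notfree by blast
    have "mty (G @ rc D @ H) (subst w0 x v) A0"
      using m_app.IH(1)[of G H] h m_app.prems(2) by simp
    moreover have "vd ((G @ rc D @ H) @ D0)" using m_app.hyps(3) h vd_mid[of G x A "H @ D0" D] by simp
    ultimately have "mty ((G @ rc D @ H) @ D0) (App v0 (subst w0 x v) (polty B0)) B0"
      using m_app.hyps(2) by - (rule mty.m_app, auto)
    then show ?thesis using h w by simp
  next
    fix H assume h: "D0 = H @ (AV x, A) # G'" "G = G0 @ H"
    have "x \<notin> set (vars G0)" using m_app.hyps(3) h by (auto simp: vd_def)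
    then have w: "subst w0 x v = w0" using m_app.hyps(1) mty_notfree by blast
    have "mty (H @ rc D @ G') (subst v0 x v) (Lolli A0 B0)"
      using m_app.IH(2)[of H G'] h m_app.prems(2) by simp
    moreover have "vd (G0 @ H @ rc D @ G')" using m_app.hyps(3) h vd_mid[of "G0 @ H" x A G' D] by simp
    ultimately have "mty (G0 @ (H @ rc D @ G')) (App (subst v0 x v) w0 (polty B0)) B0"
      using m_app.hyps(1) by - (rule mty.m_app, auto)
    then show ?thesis using h w by simp
  qed
next
  case (m_inj1 G0 v0 A0 B0) then show ?case by (auto intro: mty.intros)
next
  case (m_inj2 G0 v0 B0 A0) then show ?case by (auto intro: mty.intros)
next
  case (m_wth G0 t1 A1 t2 A2) then show ?case by (auto intro: mty.intros)
next
  case (m_proj1 G0 v0 A1 A2) then show ?case by (auto intro: mty.intros)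
next
  case (m_proj2 G0 v0 A1 A2) then show ?case by (auto intro: mty.intros)
next
  case (m_lam y A0 G0 t0 B0)
  have "vd ((AV y, A0) # G0)" using m_lam.hyps by (rule mty_vd)
  with m_lam.prems(1) have xy: "y \<noteq> x" by (auto simp: vd_def)
  have "mty (((AV y, A0) # G) @ rc D @ G') (subst t0 x v) B0"
    using m_lam.IH[of "(AV y, A0) # G" G'] m_lam.prems by simp
  then show ?case using xy by (auto intro: mty.m_lam)
next
  case (m_dunit D0 v0 G0 G1 t0 A0)
  from split3[OF m_dunit.prems(1)] show ?case
  proof (elim disjE exE conjE)
    fix H assume h: "G0 = G @ (AV x, A) # H" "G' = H @ D0 @ G1"
    have "x \<notin> set (vars D0)" using m_dunit.hyps(3) h by (auto simp: vd_def)
    then have w: "subst v0 x v = v0" using m_dunit.hyps(1) mty_notfree by blast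
    have "mty (G @ rc D @ H @ G1) (subst t0 x v) A0"
      using m_dunit.IH(2)[of G "H @ G1"] h m_dunit.prems(2) by simp
    moreover have "vd ((G @ rc D @ H) @ D0 @ G1)" using m_dunit.hyps(3) h vd_mid[of G x A "H @ D0 @ G1" D] by simp
    ultimately have "mty ((G @ rc D @ H) @ D0 @ G1) (DUnit v0 (subst t0 x v) (polty A0)) A0"
      using m_dunit.hyps(1) by - (rule mty.m_dunit, auto)
    then show ?thesis using h w by simp
  next
    fix H1 H2 assume h: "D0 = H1 @ (AV x, A) # H2" "G = G0 @ H1" "G' = H2 @ G1"
    have "x \<notin> set (vars (G0 @ G1))" using m_dunit.hyps(3) h by (auto simp: vd_def)
    then have w: "subst t0 x v = t0" using m_dunit.hyps(2) mty_notfree by blast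
    have "mty (H1 @ rc D @ H2) (subst v0 x v) One"
      using m_dunit.IH(1)[of H1 H2] h m_dunit.prems(2) by simp
    moreover have "vd (G0 @ (H1 @ rc D @ H2) @ G1)" using m_dunit.hyps(3) h vd_mid[of "G0 @ H1" x A "H2 @ G1" D] by simp
    ultimately have "mty (G0 @ (H1 @ rc D @ H2) @ G1) (DUnit (subst v0 x v) t0 (polty A0)) A0"
      using m_dunit.hyps(2) by - (rule mty.m_dunit, auto)
    then show ?thesis using h w by simp
  next
    fix H assume h: "G1 = H @ (AV x, A) # G'" "G = G0 @ D0 @ H"
    have "x \<notin> set (vars D0)" using m_dunit.hyps(3) h by (auto simp: vd_def)
    then have w: "subst v0 x v = v0" using m_dunit.hyps(1) mty_notfree by blast
    have "mty (G0 @ H @ rc D @ G') (subst t0 x v) A0"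
      using m_dunit.IH(2)[of "G0 @ H" G'] h m_dunit.prems(2) by simp
    moreover have "vd (G0 @ D0 @ H @ rc D @ G')" using m_dunit.hyps(3) h vd_mid[of "G0 @ D0 @ H" x A G' D] by simp
    ultimately have "mty (G0 @ D0 @ (H @ rc D @ G')) (DUnit v0 (subst t0 x v) (polty A0)) A0"
      using m_dunit.hyps(1) by - (rule mty.m_dunit, auto)
    then show ?thesis using h w by simp
  qed
next
  case (m_dpair D0 v0 A0 B0 G0 y z G1 t0 C)
  from split3[OF m_dpair.prems(1)] show ?case
  proof (elim disjE exE conjE)
    fix H assume h: "G0 = G @ (AV x, A) # H" "G' = H @ D0 @ G1"
    have "vd (G0 @ (AV y, A0) # (AV z, B0) # G1)" using m_dpair.hyps(2) by (rule mty_vd)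
    with h have xy: "x \<noteq> y" "x \<noteq> z" by (auto simp: vd_def)
    have "x \<notin> set (vars D0)" using m_dpair.hyps(3) h by (auto simp: vd_def)
    then have w: "subst v0 x v = v0" using m_dpair.hyps(1) mty_notfree by blast
    have "mty (G @ rc D @ H @ (AV y, A0) # (AV z, B0) # G1) (subst t0 x v) C"
      using m_dpair.IH(2)[of G "H @ (AV y, A0) # (AV z, B0) # G1"] h m_dpair.prems(2) by simp
    moreover have "vd ((G @ rc D @ H) @ D0 @ G1)" using m_dpair.hyps(3) h vd_mid[of G x A "H @ D0 @ G1" D] by simp
    ultimately have "mty ((G @ rc D @ H) @ D0 @ G1) (DPair v0 y z (subst t0 x v) (polty C)) C"
      using m_dpair.hyps(1) by - (rule mty.m_dpair, auto)
    then show ?thesis using h w xy by simp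
  next
    fix H1 H2 assume h: "D0 = H1 @ (AV x, A) # H2" "G = G0 @ H1" "G' = H2 @ G1"
    have "x \<notin> set (vars (G0 @ G1))" using m_dpair.hyps(3) h by (auto simp: vd_def)
    then have w: "(if y = x \<or> z = x then t0 else subst t0 x v) = t0"
      using m_dpair.hyps(2) mty_notfree[of _ t0 _ x v] by auto
    have "mty (H1 @ rc D @ H2) (subst v0 x v) (Tensor A0 B0)"
      using m_dpair.IH(1)[of H1 H2] h m_dpair.prems(2) by simp
    moreover have "vd (G0 @ (H1 @ rc D @ H2) @ G1)" using m_dpair.hyps(3) h vd_mid[of "G0 @ H1" x A "H2 @ G1" D] by simp
    ultimately have "mty (G0 @ (H1 @ rc D @ H2) @ G1) (DPair (subst v0 x v) y z t0 (polty C)) C"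
      using m_dpair.hyps(2) by - (rule mty.m_dpair, auto)
    then show ?thesis using h w by simp
  next
    fix H assume h: "G1 = H @ (AV x, A) # G'" "G = G0 @ D0 @ H"
    have "vd (G0 @ (AV y, A0) # (AV z, B0) # G1)" using m_dpair.hyps(2) by (rule mty_vd)
    with h have xy: "x \<noteq> y" "x \<noteq> z" by (auto simp: vd_def)
    have "x \<notin> set (vars D0)" using m_dpair.hyps(3) h by (auto simp: vd_def)
    then have w: "subst v0 x v = v0" using m_dpair.hyps(1) mty_notfree by blast
    have "mty ((G0 @ (AV y, A0) # (AV z, B0) # H) @ rc D @ G') (subst t0 x v) C"
      using m_dpair.IH(2)[of "G0 @ (AV y, A0) # (AV z, B0) # H" G'] h m_dpair.prems(2) by simp
    moreover have "vd (G0 @ D0 @ H @ rc D @ G')" using m_dpair.hyps(3) h vd_mid[of "G0 @ D0 @ H" x A G' D] by simp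
    ultimately have "mty (G0 @ D0 @ (H @ rc D @ G')) (DPair v0 y z (subst t0 x v) (polty C)) C"
      using m_dpair.hyps(1) by - (rule mty.m_dpair, auto)
    then show ?thesis using h w xy by simp
  qed
next
  case (m_dsum D0 v0 A0 B0 G0 y G1 t0 C z u0)
  from split3[OF m_dsum.prems(1)] show ?case
  proof (elim disjE exE conjE)
    fix H assume h: "G0 = G @ (AV x, A) # H" "G' = H @ D0 @ G1"
    have "vd (G0 @ (AV y, A0) # G1)" using m_dsum.hyps(2) by (rule mty_vd)
    moreover have "vd (G0 @ (AV z, B0) # G1)" using m_dsum.hyps(3) by (rule mty_vd)
    ultimately have xy: "x \<noteq> y" "x \<noteq> z" using h by (auto simp: vd_def)
    have "x \<notin> set (vars D0)" using m_dsum.hyps(4) h by (auto simp: vd_def)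
    then have w: "subst v0 x v = v0" using m_dsum.hyps(1) mty_notfree by blast
    have "mty (G @ rc D @ H @ (AV y, A0) # G1) (subst t0 x v) C"
      using m_dsum.IH(2)[of G "H @ (AV y, A0) # G1"] h m_dsum.prems(2) by simp
    moreover have "mty (G @ rc D @ H @ (AV z, B0) # G1) (subst u0 x v) C"
      using m_dsum.IH(3)[of G "H @ (AV z, B0) # G1"] h m_dsum.prems(2) by simp
    moreover have "vd ((G @ rc D @ H) @ D0 @ G1)" using m_dsum.hyps(4) h vd_mid[of G x A "H @ D0 @ G1" D] by simp
    ultimately have "mty ((G @ rc D @ H) @ D0 @ G1) (DSum v0 y (subst t0 x v) z (subst u0 x v) (polty C)) C"
      using m_dsum.hyps(1) by - (rule mty.m_dsum, auto)
    then show ?thesis using h w xy by simp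
  next
    fix H1 H2 assume h: "D0 = H1 @ (AV x, A) # H2" "G = G0 @ H1" "G' = H2 @ G1"
    have "x \<notin> set (vars (G0 @ G1))" using m_dsum.hyps(4) h by (auto simp: vd_def)
    then have w: "(if y = x then t0 else subst t0 x v) = t0" "(if z = x then u0 else subst u0 x v) = u0"
      using m_dsum.hyps(2,3) mty_notfree[of _ t0 _ x v] mty_notfree[of _ u0 _ x v] by auto
    have "mty (H1 @ rc D @ H2) (subst v0 x v) (Plus A0 B0)"
      using m_dsum.IH(1)[of H1 H2] h m_dsum.prems(2) by simp
    moreover have "vd (G0 @ (H1 @ rc D @ H2) @ G1)" using m_dsum.hyps(4) h vd_mid[of "G0 @ H1" x A "H2 @ G1" D] by simp
    ultimately have "mty (G0 @ (H1 @ rc D @ H2) @ G1) (DSum (subst v0 x v) y t0 z u0 (polty C)) C"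
      using m_dsum.hyps(2,3) by - (rule mty.m_dsum, auto)
    then show ?thesis using h w by simp
  next
    fix H assume h: "G1 = H @ (AV x, A) # G'" "G = G0 @ D0 @ H"
    have "vd (G0 @ (AV y, A0) # G1)" using m_dsum.hyps(2) by (rule mty_vd)
    moreover have "vd (G0 @ (AV z, B0) # G1)" using m_dsum.hyps(3) by (rule mty_vd)
    ultimately have xy: "x \<noteq> y" "x \<noteq> z" using h by (auto simp: vd_def)
    have "x \<notin> set (vars D0)" using m_dsum.hyps(4) h by (auto simp: vd_def)
    then have w: "subst v0 x v = v0" using m_dsum.hyps(1) mty_notfree by blast
    have "mty ((G0 @ (AV y, A0) # H) @ rc D @ G') (subst t0 x v) C"
      using m_dsum.IH(2)[of "G0 @ (AV y, A0) # H" G'] h m_dsum.prems(2) by simp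
    moreover have "mty ((G0 @ (AV z, B0) # H) @ rc D @ G') (subst u0 x v) C"
      using m_dsum.IH(3)[of "G0 @ (AV z, B0) # H" G'] h m_dsum.prems(2) by simp
    moreover have "vd (G0 @ D0 @ H @ rc D @ G')" using m_dsum.hyps(4) h vd_mid[of "G0 @ D0 @ H" x A G' D] by simp
    ultimately have "mty (G0 @ D0 @ (H @ rc D @ G')) (DSum v0 y (subst t0 x v) z (subst u0 x v) (polty C)) C"
      using m_dsum.hyps(1) by - (rule mty.m_dsum, auto)
    then show ?thesis using h w xy by simp
  qed
qed


inductive stk :: "nat list \<Rightarrow> stack \<Rightarrow> ty \<Rightarrow> ty \<Rightarrow> bool" where
  k_star: "stk [] Star W W"
| k_let: "mty (rc G @ [(AV x, A)]) u B \<Longrightarrow> stk S s B W \<Longrightarrow> stk (S @ G) (SLet x u e s) A W"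
| k_val: "mty (rc G) w A \<Longrightarrow> stk S s B W \<Longrightarrow> stk (S @ G) (SVal w e s) (Lolli A B) W"
| k_p1: "stk S s A1 W \<Longrightarrow> stk S (SProj1 e s) (With A1 A2) W"
| k_p2: "stk S s A2 W \<Longrightarrow> stk S (SProj2 e s) (With A1 A2) W"

inductive_cases stk_starE: "stk S Star A W"
inductive_cases stk_letE: "stk S (SLet x u e s) A W"
inductive_cases stk_valE: "stk S (SVal w e s) A W"
inductive_cases stk_p1E: "stk S (SProj1 e s) A W"
inductive_cases stk_p2E: "stk S (SProj2 e s) A W"

inductive_cases mty_letpE: "mty S (LetP x t u e) B"
inductive_cases mty_letnE: "mty S (LetN x t u e) B"
inductive_cases mty_appE: "mty S (App v w e) B"
inductive_cases mty_lamE: "mty S (Lam x t) B"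
inductive_cases mty_proj1E: "mty S (Proj1 v e) B"
inductive_cases mty_proj2E: "mty S (Proj2 v e) B"
inductive_cases mty_wthE: "mty S (Wth t u) B"
inductive_cases mty_dpairE: "mty S (DPair v x y t e) B"
inductive_cases mty_pairE: "mty S (Pair v w) B"
inductive_cases mty_dunitE: "mty S (DUnit v t e) B"
inductive_cases mty_unitE: "mty S Unit B"
inductive_cases mty_dsumE: "mty S (DSum v x t y u e) B"
inductive_cases mty_inj1E: "mty S (Inj1 v) B"
inductive_cases mty_inj2E: "mty S (Inj2 v) B"
inductive_cases mty_newE: "mty S New B"
inductive_cases mty_deleteE: "mty S Delete B"
inductive_cases mty_resE: "mty S (Res n) B"
inductive_cases mty_varE: "mty S (Var x) B"

lemma rc_nil: "rc G = [] \<longleftrightarrow> G = []" by (auto simp: rc_def)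
lemma rc_one: "rc G = [(AR n, R)] \<longleftrightarrow> G = [n]" by (cases G) (auto simp: rc_def)

lemma unit_inv: "mty (rc G) Unit A \<Longrightarrow> G = [] \<and> A = One"
  by (erule mty_unitE) (auto simp: rc_nil)
lemma res_inv: "mty (rc G) (Res n) A \<Longrightarrow> G = [n] \<and> A = R"
  by (erule mty_resE) (auto simp: rc_one)
lemma new_inv: "mty (rc G) New A \<Longrightarrow> G = [] \<and> A = Lolli One (Plus R One)"
  by (erule mty_newE) (auto simp: rc_nil)
lemma delete_inv: "mty (rc G) Delete A \<Longrightarrow> G = [] \<and> A = Lolli R One"
  by (erule mty_deleteE) (auto simp: rc_nil)

fun inv :: "nat list \<Rightarrow> ty \<Rightarrow> cmd \<Rightarrow> bool" where
  "inv l0 W (t, s, l, e) = (\<exists>S D A. mty (rc D) t A \<and> stk S s A W \<and> l0 = S @ D @ l)"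

lemma subst_ty0: "mty (rc G @ [(AV x, A)] @ rc G') t C \<Longrightarrow> mty (rc D) v A \<Longrightarrow>
   mty (rc (G @ D @ G')) (subst t x v) C"
  using subst_ty[of "rc G @ [(AV x, A)] @ rc G'" t C "rc G" x A "rc G'" D v] by simp

lemma step_inv: "step c c' \<Longrightarrow> inv l0 W c \<Longrightarrow> inv l0 W c'"
proof (induction rule: step.induct)
  case (s_letn x v t e s l)
  then obtain S D A where h: "mty (rc D) (LetN x v t e) A" "stk S s A W" "l0 = S @ D @ l" by auto
  from h(1) obtain G D' A' where g: "rc D = G @ D'" "mty D' v A'" "mty (G @ [(AV x, A')]) t A"
    by (auto elim: mty_letnE)
  from rc_split[OF g(1)] obtain d1 d2 where d: "D = d1 @ d2" "G = rc d1" "D' = rc d2" by blast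
  have "mty (rc (d1 @ d2 @ [])) (subst t x v) A" using g d by (intro subst_ty0) auto
  then show ?case using h d by - (simp only: inv.simps, rule exI[of _ S], rule exI[of _ "d1 @ d2"], rule exI[of _ A], auto)
next
  case (s_letp x t u e s l)
  then obtain S D A where h: "mty (rc D) (LetP x t u e) A" "stk S s A W" "l0 = S @ D @ l" by auto
  from h(1) obtain G D' A' where g: "rc D = G @ D'" "mty D' t A'" "mty (G @ [(AV x, A')]) u A"
    by (auto elim: mty_letpE)
  from rc_split[OF g(1)] obtain d1 d2 where d: "D = d1 @ d2" "G = rc d1" "D' = rc d2" by blast
  have "stk (S @ d1) (SLet x u e s) A' W" using g d h by (auto intro: k_let)
  then show ?case using h d g by - (simp only: inv.simps, rule exI[of _ "S @ d1"], rule exI[of _ d2], rule exI[of _ A'], auto)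
next
  case (s_ret v x t e s l)
  then obtain S D A where h: "mty (rc D) v A" "stk S (SLet x t e s) A W" "l0 = S @ D @ l" by auto
  from h(2) obtain S0 G B where g: "S = S0 @ G" "mty (rc G @ [(AV x, A)]) t B" "stk S0 s B W"
    by (auto elim: stk_letE)
  have "mty (rc (G @ D @ [])) (subst t x v) B" using g h by (intro subst_ty0) auto
  then show ?case using h g by - (simp only: inv.simps, rule exI[of _ S0], rule exI[of _ "G @ D"], rule exI[of _ B], auto)
next
  case (s_app v w e s l)
  then obtain S D A where h: "mty (rc D) (App v w e) A" "stk S s A W" "l0 = S @ D @ l" by auto
  from h(1) obtain G D' A' where g: "rc D = G @ D'" "mty G w A'" "mty D' v (Lolli A' A)"
    by (auto elim: mty_appE)
  from rc_split[OF g(1)] obtain d1 d2 where d: "D = d1 @ d2" "G = rc d1" "D' = rc d2" by blast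
  have "stk (S @ d1) (SVal w e s) (Lolli A' A) W" using g d h by (auto intro: k_val)
  then show ?case using h d g by - (simp only: inv.simps, rule exI[of _ "S @ d1"], rule exI[of _ d2], rule exI[of _ "Lolli A' A"], auto)
next
  case (s_lam x t v e s l)
  then obtain S D A where h: "mty (rc D) (Lam x t) A" "stk S (SVal v e s) A W" "l0 = S @ D @ l" by auto
  from h(1) obtain A1 B where g: "A = Lolli A1 B" "mty ((AV x, A1) # rc D) t B"
    by (auto elim: mty_lamE)
  from h(2) g obtain S0 G where k: "S = S0 @ G" "mty (rc G) v A1" "stk S0 s B W"
    by (auto elim: stk_valE)
  have "mty (rc ([] @ G @ D)) (subst t x v) B" using g k by (intro subst_ty0) auto
  then show ?case using h k by - (simp only: inv.simps, rule exI[of _ S0], rule exI[of _ "G @ D"], rule exI[of _ B], auto)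
next
  case (s_proj1 v e s l)
  then obtain S D A where h: "mty (rc D) (Proj1 v e) A" "stk S s A W" "l0 = S @ D @ l" by auto
  from h(1) obtain A2 where g: "mty (rc D) v (With A A2)" by (auto elim: mty_proj1E)
  then show ?case using h by (auto intro: k_p1)
next
  case (s_proj2 v e s l)
  then obtain S D A where h: "mty (rc D) (Proj2 v e) A" "stk S s A W" "l0 = S @ D @ l" by auto
  from h(1) obtain A1 where g: "mty (rc D) v (With A1 A)" by (auto elim: mty_proj2E)
  then show ?case using h by (auto intro: k_p2)
next
  case (s_wth1 t1 t2 e s l)
  then obtain S D A where h: "mty (rc D) (Wth t1 t2) A" "stk S (SProj1 e s) A W" "l0 = S @ D @ l" by auto
  from h(2) obtain A1 A2 where k: "A = With A1 A2" "stk S s A1 W" by (auto elim: stk_p1E)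
  from h(1) k have "mty (rc D) t1 A1" by (auto elim: mty_wthE)
  then show ?case using h k by auto
next
  case (s_wth2 t1 t2 e s l)
  then obtain S D A where h: "mty (rc D) (Wth t1 t2) A" "stk S (SProj2 e s) A W" "l0 = S @ D @ l" by auto
  from h(2) obtain A1 A2 where k: "A = With A1 A2" "stk S s A2 W" by (auto elim: stk_p2E)
  from h(1) k have "mty (rc D) t2 A2" by (auto elim: mty_wthE)
  then show ?case using h k by auto
next
  case (s_dpair v w x y t e s l)
  then obtain S D C where h: "mty (rc D) (DPair (Pair v w) x y t e) C" "stk S s C W" "l0 = S @ D @ l" by auto
  from h(1) obtain G D0 G' A B where g: "rc D = G @ D0 @ G'" "mty D0 (Pair v w) (Tensor A B)"
     "mty (G @ (AV x, A) # (AV y, B) # G') t C"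
    by (auto elim: mty_dpairE)
  from g(2) obtain D1 D2 where p: "D0 = D1 @ D2" "mty D1 v A" "mty D2 w B" by (auto elim: mty_pairE)
  from rc_split[OF g(1)] obtain g1 r where d: "D = g1 @ r" "G = rc g1" "D0 @ G' = rc r" by blast
  from rc_split[OF d(3)[symmetric]] obtain dd g2 where d2: "r = dd @ g2" "D0 = rc dd" "G' = rc g2" by blast
  from rc_split[OF d2(2)[symmetric, unfolded p(1)]] obtain d1 d2 where d3: "dd = d1 @ d2" "D1 = rc d1" "D2 = rc d2" by blast
  have "mty (rc g1 @ rc d1 @ (AV y, B) # rc g2) (subst t x v) C"
    using g p d d2 d3 subst_ty[of "rc g1 @ (AV x, A) # (AV y, B) # rc g2" t C "rc g1" x A "(AV y, B) # rc g2" d1 v] by simp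
  then have "mty (rc (g1 @ d1) @ [(AV y, B)] @ rc g2) (subst t x v) C" by simp
  then have "mty (rc ((g1 @ d1) @ d2 @ g2)) (subst (subst t x v) y w) C"
    using p d3 by (intro subst_ty0) auto
  then show ?case using h(2,3) d(1) d2(1) d3(1) by - (simp only: inv.simps, rule exI[of _ S], rule exI[of _ "g1 @ d1 @ d2 @ g2"], rule exI[of _ C], auto)
next
  case (s_dunit t e s l)
  then obtain S D C where h: "mty (rc D) (DUnit Unit t e) C" "stk S s C W" "l0 = S @ D @ l" by auto
  from h(1) obtain G D0 G' where g: "rc D = G @ D0 @ G'" "mty D0 Unit One" "mty (G @ G') t C"
    by (auto elim: mty_dunitE)
  from rc_split[OF g(1)] obtain g1 r where d: "D = g1 @ r" "G = rc g1" "D0 @ G' = rc r" by blast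
  from rc_split[OF d(3)[symmetric]] obtain dd g2 where d2: "r = dd @ g2" "D0 = rc dd" "G' = rc g2" by blast
  have "dd = []" using unit_inv g(2) d2 by blast
  then show ?case using h(2,3) d(1,2) d2(1,3) g(3) by - (simp only: inv.simps, rule exI[of _ S], rule exI[of _ "g1 @ g2"], rule exI[of _ C], auto)
next
  case (s_dsum1 v x1 t1 x2 t2 e s l)
  then obtain S D C where h: "mty (rc D) (DSum (Inj1 v) x1 t1 x2 t2 e) C" "stk S s C W" "l0 = S @ D @ l" by auto
  from h(1) obtain G D0 G' A B where g: "rc D = G @ D0 @ G'" "mty D0 (Inj1 v) (Plus A B)"
     "mty (G @ (AV x1, A) # G') t1 C"
    by (auto elim: mty_dsumE)
  from g(2) have p: "mty D0 v A" by (auto elim: mty_inj1E)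
  from rc_split[OF g(1)] obtain g1 r where d: "D = g1 @ r" "G = rc g1" "D0 @ G' = rc r" by blast
  from rc_split[OF d(3)[symmetric]] obtain dd g2 where d2: "r = dd @ g2" "D0 = rc dd" "G' = rc g2" by blast
  have "mty (rc (g1 @ dd @ g2)) (subst t1 x1 v) C" using g p d d2 by (intro subst_ty0) auto
  then show ?case using h(2,3) d(1) d2(1) by - (simp only: inv.simps, rule exI[of _ S], rule exI[of _ "g1 @ dd @ g2"], rule exI[of _ C], auto)
next
  case (s_dsum2 v x1 t1 x2 t2 e s l)
  then obtain S D C where h: "mty (rc D) (DSum (Inj2 v) x1 t1 x2 t2 e) C" "stk S s C W" "l0 = S @ D @ l" by auto
  from h(1) obtain G D0 G' A B where g: "rc D = G @ D0 @ G'" "mty D0 (Inj2 v) (Plus A B)"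
     "mty (G @ (AV x2, B) # G') t2 C"
    by (auto elim: mty_dsumE)
  from g(2) have p: "mty D0 v B" by (auto elim: mty_inj2E)
  from rc_split[OF g(1)] obtain g1 r where d: "D = g1 @ r" "G = rc g1" "D0 @ G' = rc r" by blast
  from rc_split[OF d(3)[symmetric]] obtain dd g2 where d2: "r = dd @ g2" "D0 = rc dd" "G' = rc g2" by blast
  have "mty (rc (g1 @ dd @ g2)) (subst t2 x2 v) C" using g p d d2 by (intro subst_ty0) auto
  then show ?case using h(2,3) d(1) d2(1) by - (simp only: inv.simps, rule exI[of _ S], rule exI[of _ "g1 @ dd @ g2"], rule exI[of _ C], auto)
next
  case (s_new1 e s n l)
  then obtain S D A where h: "mty (rc D) New A" "stk S (SVal Unit e s) A W" "l0 = S @ D @ n # l" by auto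
  from new_inv[OF h(1)] have a: "D = []" "A = Lolli One (Plus R One)" by auto
  from h(2) a obtain S0 G where k: "S = S0 @ G" "mty (rc G) Unit One" "stk S0 s (Plus R One) W"
    by (auto elim: stk_valE)
  from unit_inv[OF k(2)] have "G = []" by simp
  moreover have "mty (rc [n]) (Inj1 (Res n)) (Plus R One)" by (auto simp: rc_def intro: mty.intros)
  ultimately show ?case using h a k by - (simp only: inv.simps, rule exI[of _ "S0"], rule exI[of _ "[n]"], rule exI[of _ "Plus R One"], auto)
next
  case (s_new2 e s)
  then obtain S D A where h: "mty (rc D) New A" "stk S (SVal Unit e s) A W" "l0 = S @ D @ []" by auto
  from new_inv[OF h(1)] have a: "D = []" "A = Lolli One (Plus R One)" by auto
  from h(2) a obtain S0 G where k: "S = S0 @ G" "mty (rc G) Unit One" "stk S0 s (Plus R One) W"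
    by (auto elim: stk_valE)
  from unit_inv[OF k(2)] have "G = []" by simp
  moreover have "mty (rc []) (Inj2 Unit) (Plus R One)" by (auto simp: rc_def intro: mty.intros)
  ultimately show ?case using h a k by - (simp only: inv.simps, rule exI[of _ "S0"], rule exI[of _ "[]"], rule exI[of _ "Plus R One"], auto)
next
  case (s_delete n e s l)
  then obtain S D A where h: "mty (rc D) Delete A" "stk S (SVal (Res n) e s) A W" "l0 = S @ D @ l" by auto
  from delete_inv[OF h(1)] have a: "D = []" "A = Lolli R One" by auto
  from h(2) a obtain S0 G where k: "S = S0 @ G" "mty (rc G) (Res n) R" "stk S0 s One W"
    by (auto elim: stk_valE)
  from res_inv[OF k(2)] have "G = [n]" by simp
  moreover have "mty (rc []) Unit One" by (auto intro: mty.intros)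
  ultimately show ?case using h a k by - (simp only: inv.simps, rule exI[of _ "S0"], rule exI[of _ "[]"], rule exI[of _ One], auto)
qed


fun tr :: "ctx \<Rightarrow> actx" where
  "tr [] = []"
| "tr ((x, A) # G) = (AV x, A) # tr G"

lemma tr_append[simp]: "tr (G @ D) = tr G @ tr D"
  by (induction G rule: tr.induct) auto

lemma vars_tr[simp]: "vars (tr G) = map fst G"
  by (induction G rule: tr.induct) auto

lemma vd_tr: "ctx_ok G \<Longrightarrow> vd (tr G)"
  by (simp add: ctx_ok_def vd_def)

lemma has_ty_mty: "has_ty b G t A \<Longrightarrow> \<not> b \<Longrightarrow> mty (tr G) t A"
proof (induction rule: has_ty.induct)
  case (t_letp b D t A G x u B)
  then show ?case using mty.m_letp[of "tr D" t A "tr G" x u B] vd_tr[of "G @ D"] by simp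
next
  case (t_letn b D t A G x u B)
  then show ?case using mty.m_letn[of "tr D" t A "tr G" x u B] vd_tr[of "G @ D"] by simp
next
  case (t_pair v w b G A D B)
  then show ?case using mty.m_pair[of "tr G" v A "tr D" w B] vd_tr[of "G @ D"] by simp
next
  case (t_dpair v b D A B G x y G' t C)
  then show ?case using mty.m_dpair[of "tr D" v A B "tr G" x y "tr G'" t C] vd_tr[of "G @ D @ G'"] by simp
next
  case (t_dunit v b D G G' t A)
  then show ?case using mty.m_dunit[of "tr D" v "tr G" "tr G'" t A] vd_tr[of "G @ D @ G'"] by simp
next
  case (t_dsum v b D A B G x G' t C y u)
  then show ?case using mty.m_dsum[of "tr D" v A B "tr G" x "tr G'" t C y u] vd_tr[of "G @ D @ G'"] by simp
next
  case (t_lam b x A G t B)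
  then show ?case using mty.m_lam[of x A "tr G" t B] by simp
next
  case (t_app w v b G A D B)
  then show ?case using mty.m_app[of "tr G" w A "tr D" v B] vd_tr[of "G @ D"] by simp
qed (auto intro: mty.intros)

lemma central_pos: "central A \<Longrightarrow> polty A = Pos"
  by (cases A) auto

lemma nv: "\<not> is_val (LetP x t u Pos)" "\<not> is_val (LetN x t u Pos)" "\<not> is_val (DPair v x y t Pos)"
  "\<not> is_val (DUnit v t Pos)" "\<not> is_val (DSum v x t y u Pos)" "\<not> is_val (App v w Pos)"
  "\<not> is_val (Proj1 v Pos)" "\<not> is_val (Proj2 v Pos)"
  by (auto elim: is_val.cases)

lemma final_empty: "mty S v A \<Longrightarrow> is_val v \<Longrightarrow> central A \<Longrightarrow> vars S = [] \<Longrightarrow> S = []"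
proof (induction rule: mty.induct)
  case (m_pair G v A D w B)
  then show ?case by (auto elim: is_val.cases)
next
  case (m_inj1 G v A B)
  then show ?case by (auto elim: is_val.cases)
next
  case (m_inj2 G v B A)
  then show ?case by (auto elim: is_val.cases)
qed (auto elim: is_val.cases simp: central_pos nv)

theorem proposition1:
  fixes W :: ty and t v :: tm and l l' :: freelist and e :: pol
  assumes "central W"
    and "is_exp t"
    and "has_ty False [] t W"
    and "is_val v"
    and "has_ty True [] v W"
    and "steps (t, Star, l, Pos) (v, Star, l', e)"
  shows "l' = l"
proof -
  have "mty [] t W" using has_ty_mty[OF assms(3)] by simp
  then have i0: "inv l W (t, Star, l, Pos)"
    by (simp only: inv.simps, intro exI[of _ "[]"] exI[of _ W]) (auto intro: k_star)
  have "inv l W (v, Star, l', e)"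
    using assms(6) i0 by (induction rule: rtranclp_induct) (auto intro: step_inv)
  then obtain S D A where h: "mty (rc D) v A" "stk S Star A W" "l = S @ D @ l'" by auto
  from h(2) have "S = [] \<and> A = W" by (auto elim: stk_starE)
  moreover have "rc D = []"
    using h(1) assms(1,4) calculation by (intro final_empty) auto
  ultimately show ?thesis using h(3) by (simp add: rc_nil)
qed

end
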